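(* Let $\beta\colon Y\times Y\to[0,\infty)$ be arbitrary and define the interface velocity $V_{\mathrm{int}}=\{\{v\}\}-\beta[\![p]\!]$. For the semi-discretization described below, choose $$f^\rho=\Big(\{\{\rho\}\}_{\log}-\tfrac12[\![\rho]\!]\operatorname{sign}(V_{\mathrm{int}})\Big)V_{\mathrm{int}},\qquad f^{\rho e}=\frac{1}{\gamma-1}\frac{f^\rho}{\{\{\rho/p\}\}_{\log}}+\{\{p\}\}V_{\mathrm{int}},\qquad v^{\mathrm{num}}=V_{\mathrm{int}},$$ $f^{\rho v}$ any consistent two-point discretization of $\rho v^2+p$, and $\rho^{\mathrm{num}}$ any consistent two-point mean of $\rho$. Then the semi-discretization is entropy-stable for the entropy pair $U=-\rho s$, $F=-\rho sv$, $s=\log(p/\rho^\gamma)$.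
   Context: Let $\gamma>1$. $Y$ is the set of states $(\rho,\rho v,\rho e)$ with $\rho>0$, $p=(\gamma-1)\rho e>0$, $v=\rho v/\rho$; a time-independent gravity potential $\phi_i$ is attached to each cell. The scheme is $\partial_t\rho_i+\frac{f^\rho_{i+1/2}-f^\rho_{i-1/2}}{\Delta x}=0$, $\partial_t(\rho v)_i+\frac{f^{\rho v}_{i+1/2}-f^{\rho v}_{i-1/2}}{\Delta x}+\frac{\rho^{\mathrm{num}}_{i+1/2}[\![\phi]\!]_{i+1/2}+\rho^{\mathrm{num}}_{i-1/2}[\![\phi]\!]_{i-1/2}}{2\Delta x}=0$, $\partial_t(\rho e)_i+\frac{f^{\rho e}_{i+1/2}-f^{\rho e}_{i-1/2}}{\Delta x}-\frac{v^{\mathrm{num}}_{i+1/2}[\![p]\!]_{i+1/2}+v^{\mathrm{num}}_{i-1/2}[\![p]\!]_{i-1/2}}{2\Delta x}=0$, with subscript $i+1/2$ meaning evaluation at $(u_-,u_+)=(u_i,u_{i+1})$. Notation: $\{\{a\}\}=\tfrac12(a_-+a_+)$, $[\![a]\!]=a_+-a_-$, logarithmic mean $\{\{a\}\}_{\log}=[\![a]\!]/[\![\log a]\!]$ if $a_-\ne a_+$, $=a_-$ otherwise. Entropy-stable for $(U,F)$ means: there exists a two-point $F^{\mathrm{num}}$ with $F^{\mathrm{num}}(u,u)=F(u)$ such that for all grid states and all $i$, $U'(u_i)\cdot\partial_tu_i\le-\frac{1}{\Delta x}(F^{\mathrm{num}}(u_i,u_{i+1})-F^{\mathrm{num}}(u_{i-1},u_i))$,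 with $U'$ the gradient with respect to $(\rho,\rho v,\rho e)$. *)

theory Defs
  imports "HOL-Analysis.Analysis"
begin

type_synonym state = "real \<times> real \<times> real"

definition rho :: "state \<Rightarrow> real" where "rho u = fst u"
definition mom :: "state \<Rightarrow> real" where "mom u = fst (snd u)"
definition rhoe :: "state \<Rightarrow> real" where "rhoe u = snd (snd u)"
definition vel :: "state \<Rightarrow> real" where "vel u = mom u / rho u"
definition pres :: "real \<Rightarrow> state \<Rightarrow> real" where "pres \<gamma> u = (\<gamma> - 1) * rhoe u"

definition inY :: "real \<Rightarrow> state \<Rightarrow> bool" where
  "inY \<gamma> u \<longleftrightarrow> rho u > 0 \<and> pres \<gamma> u > 0"

definition avg :: "(state \<Rightarrow> real) \<Rightarrow> state \<Rightarrow> state \<Rightarrow> real" where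
  "avg a ul ur = (a ul + a ur) / 2"
definition jump :: "(state \<Rightarrow> real) \<Rightarrow> state \<Rightarrow> state \<Rightarrow> real" where
  "jump a ul ur = a ur - a ul"
definition logmean :: "real \<Rightarrow> real \<Rightarrow> real" where
  "logmean a b = (if a \<noteq> b then (b - a) / (ln b - ln a) else a)"
definition avglog :: "(state \<Rightarrow> real) \<Rightarrow> state \<Rightarrow> state \<Rightarrow> real" where
  "avglog a ul ur = logmean (a ul) (a ur)"

definition Vint :: "real \<Rightarrow> (state \<Rightarrow> state \<Rightarrow> real) \<Rightarrow> state \<Rightarrow> state \<Rightarrow> real" where
  "Vint \<gamma> \<beta> ul ur = avg vel ul ur - \<beta> ul ur * jump (pres \<gamma>) ul ur"

definition frho :: "real \<Rightarrow> (state \<Rightarrow> state \<Rightarrow> real) \<Rightarrow> state \<Rightarrow> state \<Rightarrow> real" where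
  "frho \<gamma> \<beta> ul ur =
     (avglog rho ul ur - jump rho ul ur * sgn (Vint \<gamma> \<beta> ul ur) / 2) * Vint \<gamma> \<beta> ul ur"

definition frhoe :: "real \<Rightarrow> (state \<Rightarrow> state \<Rightarrow> real) \<Rightarrow> state \<Rightarrow> state \<Rightarrow> real" where
  "frhoe \<gamma> \<beta> ul ur =
     (1 / (\<gamma> - 1)) * (frho \<gamma> \<beta> ul ur / avglog (\<lambda>w. rho w / pres \<gamma> w) ul ur)
     + avg (pres \<gamma>) ul ur * Vint \<gamma> \<beta> ul ur"

text \<open>Semi-discrete right-hand side (value of the time derivative of u_i) for
  generic two-point fluxes fr, fm, fe, density mean rn, velocity vn,
  gravity potential phi and grid state uu, indexed over the integers.\<close>
definition scheme ::
  "real \<Rightarrow> real \<Rightarrow> (state \<Rightarrow> state \<Rightarrow> real) \<Rightarrow> (state \<Rightarrow> state \<Rightarrow> real) \<Rightarrow>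
   (state \<Rightarrow> state \<Rightarrow> real) \<Rightarrow> (state \<Rightarrow> state \<Rightarrow> real) \<Rightarrow> (state \<Rightarrow> state \<Rightarrow> real) \<Rightarrow>
   (int \<Rightarrow> real) \<Rightarrow> (int \<Rightarrow> state) \<Rightarrow> int \<Rightarrow> state" where
  "scheme \<gamma> dx fr fm fe rn vn \<phi> uu i =
    (let ul = uu (i - 1); uc = uu i; ur = uu (i + 1) in
     ( - (fr uc ur - fr ul uc) / dx,
       - (fm uc ur - fm ul uc) / dx
         - (rn uc ur * (\<phi> (i + 1) - \<phi> i) + rn ul uc * (\<phi> i - \<phi> (i - 1))) / (2 * dx),
       - (fe uc ur - fe ul uc) / dx
         + (vn uc ur * jump (pres \<gamma>) uc ur + vn ul uc * jump (pres \<gamma>) ul uc) / (2 * dx)))"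

definition spec_entropy :: "real \<Rightarrow> state \<Rightarrow> real" where
  "spec_entropy \<gamma> u = ln (pres \<gamma> u / rho u powr \<gamma>)"
definition entU :: "real \<Rightarrow> state \<Rightarrow> real" where
  "entU \<gamma> u = - rho u * spec_entropy \<gamma> u"
definition entF :: "real \<Rightarrow> state \<Rightarrow> real" where
  "entF \<gamma> u = - rho u * spec_entropy \<gamma> u * vel u"

text \<open>Entropy stability: U'(u_i) . d/dt u_i is the Frechet derivative of U at u_i
  applied to the right-hand side.\<close>
definition entropy_stable ::
  "real \<Rightarrow> real \<Rightarrow> ((int \<Rightarrow> real) \<Rightarrow> (int \<Rightarrow> state) \<Rightarrow> int \<Rightarrow> state) \<Rightarrow> bool" where
  "entropy_stable \<gamma> dx R \<longleftrightarrow>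
    (\<exists>Fn :: state \<Rightarrow> state \<Rightarrow> real.
       (\<forall>u. inY \<gamma> u \<longrightarrow> Fn u u = entF \<gamma> u) \<and>
       (\<forall>\<phi> uu i. (\<forall>j. inY \<gamma> (uu j)) \<longrightarrow>
          frechet_derivative (entU \<gamma>) (at (uu i)) (R \<phi> uu i)
            \<le> - (Fn (uu i) (uu (i + 1)) - Fn (uu (i - 1)) (uu i)) / dx))"

end

theory Submission
  imports Defs
begin

definition w1 :: "real \<Rightarrow> state \<Rightarrow> real" where
  "w1 \<gamma> u = \<gamma> - spec_entropy \<gamma> u"
definition w3 :: "real \<Rightarrow> state \<Rightarrow> real" where
  "w3 \<gamma> u = - (\<gamma> - 1) * rho u / pres \<gamma> u"
lemma entU_deriv:
  assumes g: "\<gamma> > 1" and Y: "inY \<gamma> x"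
  shows "frechet_derivative (entU \<gamma>) (at x) =
    (\<lambda>h. w1 \<gamma> x * fst h + w3 \<gamma> x * snd (snd h))"
proof -
  obtain r m e where x: "x = (r, m, e)" by (cases x) auto
  have r: "r > 0" and p: "(\<gamma> - 1) * e > 0" using Y unfolding x inY_def rho_def pres_def rhoe_def by auto
  have e: "e > 0" using p g by (simp add: zero_less_mult_iff)
  have eq: "entU \<gamma> = (\<lambda>u. - fst u * ln ((\<gamma> - 1) * snd (snd u) / fst u powr \<gamma>))"
    by (auto simp: entU_def spec_entropy_def rho_def pres_def rhoe_def fun_eq_iff)
  have H: "(entU \<gamma> has_derivative
    (\<lambda>h. (\<gamma> - spec_entropy \<gamma> x) * fst h - (\<gamma> - 1) * rho x / pres \<gamma> x * snd (snd h))) (at x)"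
    unfolding eq
    unfolding x
    apply (rule derivative_eq_intros refl | (use r p e in \<open>simp; fail\<close>))+
    apply (rule ext)
    using r p e g apply (simp add: spec_entropy_def rho_def pres_def rhoe_def powr_diff field_simps)
    done
  have E: "(\<lambda>h. (\<gamma> - spec_entropy \<gamma> x) * fst h - (\<gamma> - 1) * rho x / pres \<gamma> x * snd (snd h))
     = (\<lambda>h. w1 \<gamma> x * fst h + w3 \<gamma> x * snd (snd h))"
  proof -
    have w3eq: "w3 \<gamma> x = - ((\<gamma> - 1) * rho x / pres \<gamma> x)"
      unfolding w3_def by (simp only: mult_minus_left minus_divide_left)
    show ?thesis unfolding w1_def w3eq by (simp only: diff_conv_add_uminus mult_minus_left)
  qed
  from H[unfolded E] show ?thesis by (rule frechet_derivative_at[symmetric])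
qed
lemma logmean_ln:
  assumes "a > 0" "b > 0"
  shows "(ln b - ln a) * logmean a b = b - a" and "logmean a b > 0"
proof -
  show "(ln b - ln a) * logmean a b = b - a"
  proof (cases "a = b")
    case False
    then have "ln b \<noteq> ln a" using assms by simp
    then show ?thesis using False by (simp add: logmean_def)
  qed (simp add: logmean_def)
  show "logmean a b > 0"
  proof (cases "a = b")
    case False
    show ?thesis
    proof (cases "a < b")
      case True then have "ln a < ln b" using assms by simp
      then show ?thesis using True False by (simp add: logmean_def)
    next
      case f: False then have "ln b < ln a" using assms False by simp
      then show ?thesis using f False by (simp add: logmean_def divide_neg_neg)
    qed
  qed (use assms in \<open>simp add: logmean_def\<close>)
qed

lemma key:
  fixes g rL rR pL pR V :: real
  assumes g: "g > 1" and pos: "rL > 0" "rR > 0" "pL > 0" "pR > 0"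
  defines "lb \<equiv> logmean (rL/pL) (rR/pR)" and "lr \<equiv> logmean rL rR"
  defines "fr \<equiv> (lr - (rR - rL) * sgn V / 2) * V"
  defines "fe \<equiv> 1/(g-1) * (fr / lb) + (pL + pR)/2 * V"
  defines "w1L \<equiv> g - ln (pL / rL powr g)" and "w1R \<equiv> g - ln (pR / rR powr g)"
  defines "w3L \<equiv> - (g - 1) * rL / pL" and "w3R \<equiv> - (g - 1) * rR / pR"
  shows "(- (w1L * fr + w3L * fe) + w3L * V * (pR - pL) / 2)
        + (w1R * fr + w3R * fe + w3R * V * (pR - pL) / 2) \<le> 0"
proof -
  have bL: "rL/pL > 0" and bR: "rR/pR > 0" using pos by auto
  have hb: "(ln (rR/pR) - ln (rL/pL)) * lb = rR/pR - rL/pL" and lbp: "lb > 0"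
    using logmean_ln[OF bL bR] unfolding lb_def by auto
  have hr: "(ln rR - ln rL) * lr = rR - rL"
    using logmean_ln[OF pos(1,2)] unfolding lr_def by auto
  have w1: "w1R - w1L = (ln (rR/pR) - ln (rL/pL)) + (g - 1) * (ln rR - ln rL)"
    unfolding w1L_def w1R_def using pos by (simp add: ln_div ln_powr algebra_simps)
  have w3: "w3R - w3L = - (g - 1) * (rR/pR - rL/pL)"
    unfolding w3L_def w3R_def by (simp add: algebra_simps)
  have w3s: "(w3L + w3R) * (pR - pL) / 2 + (w3R - w3L) * (pL + pR) / 2 = - (g - 1) * (rR - rL)"
    unfolding w3L_def w3R_def using pos by (simp add: field_simps)
  have E1: "(- (w1L * fr + w3L * fe) + w3L * V * (pR - pL) / 2)
        + (w1R * fr + w3R * fe + w3R * V * (pR - pL) / 2)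
      = (w1R - w1L) * fr + (w3R - w3L) * fe + (w3L + w3R) * (pR - pL) / 2 * V"
    by (simp add: field_simps)
  have E2: "(w3R - w3L) * fe = - (ln (rR/pR) - ln (rL/pL)) * fr + (w3R - w3L) * (pL + pR) / 2 * V"
  proof -
    have D: "rR/pR - rL/pL = (ln (rR/pR) - ln (rL/pL)) * lb" using hb by simp
    have "(w3R - w3L) * fe = (w3R - w3L) * (1/(g-1) * (fr / lb)) + (w3R - w3L) * (pL + pR) / 2 * V"
      unfolding fe_def by (simp add: algebra_simps)
    also have "(w3R - w3L) * (1/(g-1) * (fr / lb)) = - (ln (rR/pR) - ln (rL/pL)) * fr"
      unfolding w3 D using g lbp by (simp add: field_simps)
    finally show ?thesis .
  qed
  have E3: "(w3L + w3R) * (pR - pL) / 2 * V + (w3R - w3L) * (pL + pR) / 2 * V = - (g - 1) * (rR - rL) * V"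
    using w3s by (metis distrib_right)
  have E4: "(w1R - w1L) * fr = (ln (rR/pR) - ln (rL/pL)) * fr + (g - 1) * (ln rR - ln rL) * fr"
    unfolding w1 by (simp add: algebra_simps)
  have "(- (w1L * fr + w3L * fe) + w3L * V * (pR - pL) / 2)
        + (w1R * fr + w3R * fe + w3R * V * (pR - pL) / 2)
      = (g - 1) * ((ln rR - ln rL) * fr - (rR - rL) * V)"
    unfolding E1 E2 E4 using E3 by (simp add: algebra_simps)
  also have "(ln rR - ln rL) * fr - (rR - rL) * V = - ((ln rR - ln rL) * (rR - rL)) * (sgn V * V) / 2"
  proof -
    have "(ln rR - ln rL) * fr = ((ln rR - ln rL) * lr - (ln rR - ln rL) * (rR - rL) * sgn V / 2) * V"
      unfolding fr_def by (simp add: algebra_simps)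
    also have "\<dots> = ((rR - rL) - (ln rR - ln rL) * (rR - rL) * sgn V / 2) * V" unfolding hr ..
    finally have c: "(ln rR - ln rL) * fr = ((rR - rL) - (ln rR - ln rL) * (rR - rL) * sgn V / 2) * V" .
    show ?thesis unfolding c by (simp add: field_simps)
  qed
  also have "\<dots> \<le> 0"
  proof -
    have "(ln rR - ln rL) * (rR - rL) \<ge> 0"
      using pos by (cases "rL \<le> rR") (auto intro!: mult_nonneg_nonneg mult_nonpos_nonpos)
    moreover have "sgn V * V \<ge> 0" by (cases V "0::real" rule: linorder_cases) auto 
    ultimately show ?thesis by (simp add: mult_nonneg_nonneg)
  qed
  finally show ?thesis using g by (simp add: mult_nonneg_nonpos)
qed

definition aL :: "real \<Rightarrow> (state \<Rightarrow> state \<Rightarrow> real) \<Rightarrow> state \<Rightarrow> state \<Rightarrow> real" where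
  "aL \<gamma> \<beta> ul ur = - (w1 \<gamma> ul * frho \<gamma> \<beta> ul ur + w3 \<gamma> ul * frhoe \<gamma> \<beta> ul ur)
      + w3 \<gamma> ul * Vint \<gamma> \<beta> ul ur * jump (pres \<gamma>) ul ur / 2"
definition aR :: "real \<Rightarrow> (state \<Rightarrow> state \<Rightarrow> real) \<Rightarrow> state \<Rightarrow> state \<Rightarrow> real" where
  "aR \<gamma> \<beta> ul ur = w1 \<gamma> ur * frho \<gamma> \<beta> ul ur + w3 \<gamma> ur * frhoe \<gamma> \<beta> ul ur
      + w3 \<gamma> ur * Vint \<gamma> \<beta> ul ur * jump (pres \<gamma>) ul ur / 2"

lemma keyS:
  assumes g: "\<gamma> > 1" and L: "inY \<gamma> ul" and R: "inY \<gamma> ur"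
  shows "aL \<gamma> \<beta> ul ur + aR \<gamma> \<beta> ul ur \<le> 0"
proof -
  have "rho ul > 0" "rho ur > 0" "pres \<gamma> ul > 0" "pres \<gamma> ur > 0"
    using L R by (auto simp: inY_def)
  note k = key[OF g this, of "Vint \<gamma> \<beta> ul ur"]
  show ?thesis
    unfolding aL_def aR_def w1_def w3_def frhoe_def frho_def avglog_def avg_def jump_def
      spec_entropy_def
    by (rule k)
qed

lemma consist:
  assumes g: "\<gamma> > 1" and Y: "inY \<gamma> u"
  shows "- aL \<gamma> \<beta> u u = entF \<gamma> u"
proof -
  have r: "rho u > 0" and p: "pres \<gamma> u > 0" using Y by (auto simp: inY_def)
  have V: "Vint \<gamma> \<beta> u u = vel u" by (simp add: Vint_def avg_def jump_def)
  have fr: "frho \<gamma> \<beta> u u = rho u * vel u" by (simp add: frho_def V avglog_def logmean_def jump_def)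
  have fe: "frhoe \<gamma> \<beta> u u = 1 / (\<gamma> - 1) * (pres \<gamma> u * vel u) + pres \<gamma> u * vel u"
    using r p by (simp add: frhoe_def fr V avglog_def logmean_def avg_def)
  show ?thesis
    using r p g unfolding aL_def fr fe V w1_def w3_def entF_def jump_def
    by (simp add: field_simps)
qed

lemma D_alg:
  fixes W1 W3 a b e f V1 J1 V2 J2 dx :: real
  assumes "dx \<noteq> 0"
  shows "W1 * (-(a - b)/dx) + W3 * (-(e - f)/dx + (V1*J1 + V2*J2)/(2*dx))
    = ((-(W1*a + W3*e) + W3*V1*J1/2) + (W1*b + W3*f + W3*V2*J2/2))/dx"
  using assms by (simp add: field_simps)

theorem mainTheorem13:
  fixes \<gamma> dx :: real
    and \<beta> fm rn :: "state \<Rightarrow> state \<Rightarrow> real"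
  assumes "\<gamma> > 1" and "dx > 0"
    and "\<forall>u w. inY \<gamma> u \<longrightarrow> inY \<gamma> w \<longrightarrow> \<beta> u w \<ge> 0"
    and "\<forall>u. inY \<gamma> u \<longrightarrow> fm u u = rho u * (vel u)\<^sup>2 + pres \<gamma> u"
    and "\<forall>u. inY \<gamma> u \<longrightarrow> rn u u = rho u"
  shows "entropy_stable \<gamma> dx
           (scheme \<gamma> dx (frho \<gamma> \<beta>) fm (frhoe \<gamma> \<beta>) rn (Vint \<gamma> \<beta>))"
  unfolding entropy_stable_def
proof (intro exI[of _ "\<lambda>ul ur. - aL \<gamma> \<beta> ul ur"] conjI allI impI)
  fix u assume "inY \<gamma> u"
  then show "- aL \<gamma> \<beta> u u = entF \<gamma> u" using consist assms(1) by blast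
next
  fix \<phi> :: "int \<Rightarrow> real" and uu :: "int \<Rightarrow> state" and i :: int
  assume Y: "\<forall>j. inY \<gamma> (uu j)"
  let ?ul = "uu (i - 1)" and ?uc = "uu i" and ?ur = "uu (i + 1)"
  have D: "frechet_derivative (entU \<gamma>) (at ?uc)
      (scheme \<gamma> dx (frho \<gamma> \<beta>) fm (frhoe \<gamma> \<beta>) rn (Vint \<gamma> \<beta>) \<phi> uu i)
      = (aL \<gamma> \<beta> ?uc ?ur + aR \<gamma> \<beta> ?ul ?uc) / dx"
    unfolding entU_deriv[OF assms(1) Y[rule_format]] scheme_def Let_def aL_def aR_def
    apply (simp only: fst_conv snd_conv)
    apply (rule D_alg)
    using assms(2) by simp
  have "aL \<gamma> \<beta> ?ul ?uc + aR \<gamma> \<beta> ?ul ?uc \<le> 0"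
    using keyS assms(1) Y by blast
  then show "frechet_derivative (entU \<gamma>) (at ?uc)
      (scheme \<gamma> dx (frho \<gamma> \<beta>) fm (frhoe \<gamma> \<beta>) rn (Vint \<gamma> \<beta>) \<phi> uu i)
      \<le> - ((- aL \<gamma> \<beta> ?uc ?ur) - (- aL \<gamma> \<beta> ?ul ?uc)) / dx"
    unfolding D using assms(2) by (simp add: divide_right_mono)
qed

end
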